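(* Let $U=\{u_1,\dots,u_{3n}\}$ with $n\ge1$ and let $\mathcal{S}=\{S_1,\dots,S_p\}$, $p\ge 1$, be a family of $3$-element subsets of $U$. Fix an integer $m\ge 6n+3p$. Build the labeled complete bipartite graph $G$ with partite sets $V_1=\{x_1,\dots,x_{3n}\}\cup\{x(S_1),\dots,x(S_p)\}$ and $V_2=\{y_1,\dots,y_{3n}\}\cup\{y_k(S_i):1\le i\le p,\,1\le k\le m\}\cup\{z_1,\dots,z_{3n}\}$, with labels: $x_iy_j$ is $+$ iff $i=j$ or $u_i,u_j$ lie in a common member of $\mathcal{S}$; $x(S_i)y_k(S_\ell)$ is $+$ iff $i=\ell$; $x_iy_k(S_j)$ and $x(S_j)y_i$ are $+$ iff $u_i\in S_j$; $x_iz_j$ is $+$ for all $i,j$; $x(S_i)z_j$ is $-$ for all $i,j$. Assign tolerances $t_{x(S_i)}=3$ and $t_{x_i}=m(d(u_i)-1)+(c(u_i)-2)+(3n-3)$, where $d(u_i)$ is the number of members of $\mathcal{S}$ containing $u_i$ and $c(u_i)$ is the number of $u_j\in U\setminus\{u_i\}$ lying in a common member of $\mathcal{S}$ with $u_i$. Then $G$ has a clustering in which each $v\in V_1$ has at most $t_v$ incident errors if and only if there is a subfamily $\mathcal{S}'\subseteq\mathcal{S}$ such that each element of $U$ lies in exactly one member of $\mathcal{S}'$.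
   Context: A clustering is a partition of $V(G)$. An error at a vertex $v$ is an incident edge that is a $+$ edge between different clusters or a $-$ edge within a cluster. *)

theory Defs
  imports Main "HOL-Library.Disjoint_Sets"
begin

(* Generic notions: a signed graph on vertex set V with adjacency E and
   sign predicate pos (True = '+' edge).  A clustering is a partition of V. *)

definition same_cluster :: "'a set set \<Rightarrow> 'a \<Rightarrow> 'a \<Rightarrow> bool" where
  "same_cluster P u v = (\<exists>C\<in>P. u \<in> C \<and> v \<in> C)"

definition errors_at ::
  "'a set \<Rightarrow> ('a \<Rightarrow> 'a \<Rightarrow> bool) \<Rightarrow> ('a \<Rightarrow> 'a \<Rightarrow> bool) \<Rightarrow> 'a set set \<Rightarrow> 'a \<Rightarrow> nat" where
  "errors_at V E pos P v =
     card {w \<in> V. E v w \<and>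
        ((pos v w \<and> \<not> same_cluster P v w) \<or> (\<not> pos v w \<and> same_cluster P v w))}"

(* Vertices of the construction (indices are 1-based as in the paper):
   X i = x_i, XS i = x(S_i), Y j = y_j, YS i k = y_k(S_i), Z j = z_j *)
datatype vtx = X nat | XS nat | Y nat | YS nat nat | Z nat

definition V1 :: "nat \<Rightarrow> nat \<Rightarrow> vtx set" where
  "V1 n p = X ` {1..3*n} \<union> XS ` {1..p}"

definition V2 :: "nat \<Rightarrow> nat \<Rightarrow> nat \<Rightarrow> vtx set" where
  "V2 n p m = Y ` {1..3*n} \<union> {YS i k | i k. i \<in> {1..p} \<and> k \<in> {1..m}} \<union> Z ` {1..3*n}"

definition adjG :: "nat \<Rightarrow> nat \<Rightarrow> nat \<Rightarrow> vtx \<Rightarrow> vtx \<Rightarrow> bool" where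
  "adjG n p m u v = ((u \<in> V1 n p \<and> v \<in> V2 n p m) \<or> (u \<in> V2 n p m \<and> v \<in> V1 n p))"

(* label of an edge (V1-end first); True = '+' *)
fun lab :: "nat \<Rightarrow> (nat \<Rightarrow> nat set) \<Rightarrow> vtx \<Rightarrow> vtx \<Rightarrow> bool" where
  "lab p S (X i) (Y j) = (i = j \<or> (\<exists>l\<in>{1..p}. i \<in> S l \<and> j \<in> S l))"
| "lab p S (XS i) (YS l k) = (i = l)"
| "lab p S (X i) (YS j k) = (i \<in> S j)"
| "lab p S (XS j) (Y i) = (i \<in> S j)"
| "lab p S (X i) (Z j) = True"
| "lab p S (XS i) (Z j) = False"
| "lab p S _ _ = False"

definition posG :: "nat \<Rightarrow> (nat \<Rightarrow> nat set) \<Rightarrow> vtx \<Rightarrow> vtx \<Rightarrow> bool" where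
  "posG p S u v = (lab p S u v \<or> lab p S v u)"

definition dS :: "nat \<Rightarrow> (nat \<Rightarrow> nat set) \<Rightarrow> nat \<Rightarrow> nat" where
  "dS p S i = card {l \<in> {1..p}. i \<in> S l}"

definition cS :: "nat \<Rightarrow> nat \<Rightarrow> (nat \<Rightarrow> nat set) \<Rightarrow> nat \<Rightarrow> nat" where
  "cS n p S i = card {j \<in> {1..3*n} - {i}. \<exists>l\<in>{1..p}. i \<in> S l \<and> j \<in> S l}"

(* tolerances of vertices in V1 (as integers: may be negative) *)
fun tol :: "nat \<Rightarrow> nat \<Rightarrow> nat \<Rightarrow> (nat \<Rightarrow> nat set) \<Rightarrow> vtx \<Rightarrow> int" where
  "tol n p m S (XS i) = 3"
| "tol n p m S (X i) = int m * (int (dS p S i) - 1) + (int (cS n p S i) - 2) + (3 * int n - 3)"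
| "tol n p m S _ = 0"

end

theory Submission
  imports Defs
begin

lemma memV1[simp]: "X i \<in> V1 n p \<longleftrightarrow> i \<in> {1..3*n}" "XS l \<in> V1 n p \<longleftrightarrow> l \<in> {1..p}"
  "Y j \<notin> V1 n p" "YS a b \<notin> V1 n p" "Z j \<notin> V1 n p"
  by (auto simp: V1_def)

lemma memV2[simp]: "X i \<notin> V2 n p m" "XS l \<notin> V2 n p m" "Y j \<in> V2 n p m \<longleftrightarrow> j \<in> {1..3*n}"
  "YS a b \<in> V2 n p m \<longleftrightarrow> a \<in> {1..p} \<and> b \<in> {1..m}" "Z j \<in> V2 n p m \<longleftrightarrow> j \<in> {1..3*n}"
  by (auto simp: V2_def)

lemma finite_V1: "finite (V1 n p)" by (simp add: V1_def)

lemma finite_V2: "finite (V2 n p m)"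
proof -
  have "{YS i k | i k. i \<in> {1..p} \<and> k \<in> {1..m}} = (\<lambda>(i,k). YS i k) ` ({1..p}\<times>{1..m})" by auto
  then show ?thesis by (simp add: V2_def)
qed

lemma sc_trans: assumes "partition_on A P" "same_cluster P u v" "same_cluster P v w"
  shows "same_cluster P u w"
  using assms unfolding partition_on_def disjoint_def same_cluster_def by blast

lemma sc_sym: "same_cluster P u v \<Longrightarrow> same_cluster P v u"
  unfolding same_cluster_def by blast

fun gcl :: "(nat \<Rightarrow> nat) \<Rightarrow> vtx \<Rightarrow> nat" where
  "gcl f (X u) = f u" | "gcl f (Y u) = f u" | "gcl f (Z u) = f u"
| "gcl f (XS l) = l" | "gcl f (YS l k) = l"

definition cov :: "nat set \<Rightarrow> (nat \<Rightarrow> nat set) \<Rightarrow> nat \<Rightarrow> nat" where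
  "cov I S i = (THE l. l \<in> I \<and> i \<in> S l)"

locale cc =
  fixes n p m :: nat and S :: "nat \<Rightarrow> nat set"
  assumes n1: "n \<ge> 1" and p1: "p \<ge> 1"
    and Sok: "\<forall>l\<in>{1..p}. S l \<subseteq> {1..3*n} \<and> card (S l) = 3"
    and mbig: "m \<ge> 6*n + 3*p"
begin

abbreviation "VV \<equiv> V1 n p \<union> V2 n p m"

definition ES where "ES P v = {w \<in> VV. adjG n p m v w \<and>
   (posG p S v w \<and> \<not> same_cluster P v w \<or> \<not> posG p S v w \<and> same_cluster P v w)}"

lemma err_eq: "errors_at VV (adjG n p m) (posG p S) P v = card (ES P v)"
  by (simp add: errors_at_def ES_def)

lemma fin_ES: "finite (ES P v)"
  by (rule finite_subset[of _ VV]) (auto simp: ES_def finite_V1 finite_V2)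

lemma Ssub: "l \<in> {1..p} \<Longrightarrow> S l \<subseteq> {1..3*n}" using Sok by auto
lemma Scard: "l \<in> {1..p} \<Longrightarrow> card (S l) = 3" using Sok by auto
lemma Sfin: "l \<in> {1..p} \<Longrightarrow> finite (S l)" using Ssub finite_subset by blast

definition N where "N i = {j\<in>{1..3*n}. j = i \<or> (\<exists>l\<in>{1..p}. i \<in> S l \<and> j \<in> S l)}"
definition L where "L i = {l\<in>{1..p}. i \<in> S l}"

lemma card_L: "card (L i) = dS p S i" by (simp add: L_def dS_def)

lemma card_N: assumes "i\<in>{1..3*n}" shows "card (N i) = cS n p S i + 1"
proof -
  have "N i = insert i {j \<in> {1..3*n} - {i}. \<exists>l\<in>{1..p}. i \<in> S l \<and> j \<in> S l}"
    using assms by (auto simp: N_def)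
  then show ?thesis by (simp add: cS_def)
qed

lemma cS_le: assumes "i\<in>{1..3*n}" shows "cS n p S i \<le> 3*n - 1"
proof -
  have "cS n p S i \<le> card ({1..3*n} - {i})" unfolding cS_def by (rule card_mono) auto
  also have "\<dots> = 3*n - 1" using assms by simp
  finally show ?thesis .
qed

lemma S_N: "l \<in> {1..p} \<Longrightarrow> i \<in> S l \<Longrightarrow> S l \<subseteq> N i"
  using Ssub[of l] unfolding N_def by blast

definition Mis where "Mis P l = {k\<in>{1..m}. \<not> same_cluster P (XS l) (YS l k)}"
definition Bs where "Bs P l = {(a,k). a\<in>{1..p} \<and> a \<noteq> l \<and> k\<in>{1..m} \<and> same_cluster P (XS l) (YS a k)}"
definition Zc where "Zc P l = {j\<in>{1..3*n}. same_cluster P (XS l) (Z j)}"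
definition Yc where "Yc P l = {j\<in>{1..3*n}. same_cluster P (XS l) (Y j)}"

lemma fin_Mis: "finite (Mis P l)" by (rule finite_subset[of _ "{1..m}"]) (auto simp: Mis_def)
lemma fin_Bs: "finite (Bs P l)" by (rule finite_subset[of _ "{1..p}\<times>{1..m}"]) (auto simp: Bs_def)
lemma fin_Zc: "finite (Zc P l)" by (rule finite_subset[of _ "{1..3*n}"]) (auto simp: Zc_def)
lemma fin_Yc: "finite (Yc P l)" by (rule finite_subset[of _ "{1..3*n}"]) (auto simp: Yc_def)


context
  fixes P assumes part: "partition_on VV P"
    and tolok: "\<forall>v\<in>V1 n p. int (errors_at VV (adjG n p m) (posG p S) P v) \<le> tol n p m S v"
begin

lemma errb: "v \<in> V1 n p \<Longrightarrow> int (card (ES P v)) \<le> tol n p m S v"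
  using tolok err_eq by simp

lemma trans': "same_cluster P u v \<Longrightarrow> same_cluster P v w \<Longrightarrow> same_cluster P u w"
  using sc_trans[OF part] by blast

lemma XS_bound: assumes l: "l \<in> {1..p}"
  shows "card (Mis P l) + card (Bs P l) + card (Zc P l) + card (S l - Yc P l) + card (Yc P l - S l) \<le> 3"
proof -
  have Sl: "S l \<subseteq> {1..3*n}" "finite (S l)" using Ssub Sfin l by auto
  let ?A1 = "YS l ` Mis P l"
  let ?A2 = "(\<lambda>(a,b). YS a b) ` Bs P l"
  let ?A3 = "Z ` Zc P l"
  let ?A4 = "Y ` (S l - Yc P l)"
  let ?A5 = "Y ` (Yc P l - S l)"
  have sub: "?A1 \<union> ?A2 \<union> ?A3 \<union> ?A4 \<union> ?A5 \<subseteq> ES P (XS l)"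
    using l Sl(1) by (auto simp: ES_def Mis_def Bs_def Zc_def Yc_def adjG_def posG_def)
  have c1: "card ?A1 = card (Mis P l)" by (rule card_image) (simp add: inj_on_def)
  have c2: "card ?A2 = card (Bs P l)" by (rule card_image) (auto simp: inj_on_def)
  have c3: "card ?A3 = card (Zc P l)" by (rule card_image) (simp add: inj_on_def)
  have c4: "card ?A4 = card (S l - Yc P l)" by (rule card_image) (simp add: inj_on_def)
  have c5: "card ?A5 = card (Yc P l - S l)" by (rule card_image) (simp add: inj_on_def)
  have f: "finite ?A1" "finite ?A2" "finite ?A3" "finite ?A4" "finite ?A5"
    using fin_Mis fin_Bs fin_Zc fin_Yc Sl by auto
  have u: "card (?A1 \<union> ?A2 \<union> ?A3 \<union> ?A4 \<union> ?A5) = card ?A1 + card ?A2 + card ?A3 + card ?A4 + card ?A5"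
    using f by (subst card_Un_disjoint, auto simp: Bs_def)+
  have "card (?A1 \<union> ?A2 \<union> ?A3 \<union> ?A4 \<union> ?A5) \<le> card (ES P (XS l))"
    by (rule card_mono[OF fin_ES sub])
  moreover have "int (card (ES P (XS l))) \<le> 3" using errb[of "XS l"] l by simp
  ultimately show ?thesis using u c1 c2 c3 c4 c5 by linarith
qed


lemma key: assumes l: "l \<in> {1..p}" and i: "i \<in> S l" and sci: "same_cluster P (X i) (XS l)"
  shows "S l \<subseteq> Yc P l"
proof -
  have iI: "i \<in> {1..3*n}" using Ssub[OF l] i by auto
  have Sl: "S l \<subseteq> {1..3*n}" "finite (S l)" "card (S l) = 3" using Ssub Sfin Scard l by auto
  have scl: "same_cluster P (XS l) (X i)" by (rule sc_sym[OF sci])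
  define T where "T = (L i - {l}) \<times> {1..m}"
  define T1 where "T1 = {x\<in>T. \<not> same_cluster P (X i) (YS (fst x) (snd x))}"
  define Zo where "Zo = {j\<in>{1..3*n}. \<not> same_cluster P (X i) (Z j)}"
  have finL: "finite (L i)" by (rule finite_subset[of _ "{1..p}"]) (auto simp: L_def)
  have lL: "l \<in> L i" using l i by (simp add: L_def)
  have finT: "finite T" using finL by (simp add: T_def)
  have finT1: "finite T1" using finT by (simp add: T1_def)
  have finN: "finite (N i)" by (simp add: N_def)
  let ?A1 = "(\<lambda>(a,b). YS a b) ` T1"
  let ?A2 = "Z ` Zo"
  let ?A3 = "Y ` (N i - Yc P l)"
  have s1: "?A1 \<subseteq> ES P (X i)"
    using iI by (auto simp: ES_def T1_def T_def L_def adjG_def posG_def)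
  have s2: "?A2 \<subseteq> ES P (X i)"
    using iI by (auto simp: ES_def Zo_def adjG_def posG_def)
  have s3: "?A3 \<subseteq> ES P (X i)"
  proof
    fix w assume "w \<in> ?A3"
    then obtain j where w: "w = Y j" and j: "j \<in> N i" "j \<notin> Yc P l" by auto
    have j3: "j \<in> {1..3*n}" using j by (simp add: N_def)
    have "\<not> same_cluster P (X i) (Y j)"
      using trans'[OF scl] j j3 by (auto simp: Yc_def)
    then show "w \<in> ES P (X i)" using j iI w by (auto simp: ES_def N_def adjG_def posG_def)
  qed
  have c1: "card ?A1 = card T1" by (rule card_image) (auto simp: inj_on_def)
  have c2: "card ?A2 = card Zo" by (rule card_image) (simp add: inj_on_def)
  have c3: "card ?A3 = card (N i - Yc P l)" by (rule card_image) (simp add: inj_on_def)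
  have u: "card (?A1 \<union> ?A2 \<union> ?A3) = card ?A1 + card ?A2 + card ?A3"
    using finT1 finN by (subst card_Un_disjoint, auto simp: Zo_def)+
  have "card (?A1 \<union> ?A2 \<union> ?A3) \<le> card (ES P (X i))"
    by (rule card_mono[OF fin_ES]) (use s1 s2 s3 in blast)
  moreover have tolX: "int (card (ES P (X i))) \<le> tol n p m S (X i)" using errb[of "X i"] iI by simp
  ultimately have E: "int (card T1) + int (card Zo) + int (card (N i - Yc P l))
     \<le> int m * (int (dS p S i) - 1) + (int (cS n p S i) - 2) + (3 * int n - 3)"
    using u c1 c2 c3 by simp
  have d1: "dS p S i \<ge> 1" using card_L[of i] finL lL
    by (metis One_nat_def Suc_leI card_gt_0_iff empty_iff)
  have "card T = (card (L i) - 1) * m" using finL lL by (simp add: T_def card_cartesian_product)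
  then have cT: "int (card T) = int m * (int (dS p S i) - 1)" using d1 card_L[of i]
    by (simp add: of_nat_diff algebra_simps)
  have "T - T1 \<subseteq> Bs P l"
  proof
    fix x assume x: "x \<in> T - T1"
    then obtain a b where xab: "x = (a,b)" by (cases x)
    have "same_cluster P (XS l) (YS a b)" using x xab trans'[OF scl] by (auto simp: T1_def)
    then show "x \<in> Bs P l" using x xab by (auto simp: T_def Bs_def L_def)
  qed
  then have "card (T - T1) \<le> card (Bs P l)" by (rule card_mono[OF fin_Bs])
  moreover have "card (T - T1) = card T - card T1"
    by (rule card_Diff_subset[OF finT1]) (auto simp: T1_def)
  moreover have "card T1 \<le> card T" by (rule card_mono[OF finT]) (auto simp: T1_def)
  ultimately have TT: "card T \<le> card T1 + card (Bs P l)" by linarith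
  have "Zo = {1..3*n} - Zc P l"
    using trans'[OF scl] trans'[OF sci] by (auto simp: Zo_def Zc_def)
  moreover have "card ({1..3*n} - Zc P l) = card {1..3*n} - card (Zc P l)"
    by (rule card_Diff_subset[OF fin_Zc]) (auto simp: Zc_def)
  moreover have "card (Zc P l) \<le> card {1..3*n}" by (rule card_mono) (auto simp: Zc_def)
  ultimately have ZZ: "card Zo + card (Zc P l) = 3*n" by simp
  have NN: "card (N i - Yc P l) + card (N i \<inter> Yc P l) = cS n p S i + 1"
    using card_Int_Diff[OF finN, of "Yc P l"] card_N[OF iI] by simp
  have "card (N i \<inter> Yc P l) \<le> card (Yc P l)" by (rule card_mono[OF fin_Yc]) auto
  moreover have "card (Yc P l) = card (S l \<inter> Yc P l) + card (Yc P l - S l)"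
    using card_Int_Diff[OF fin_Yc, where B="S l"] by (simp add: Int_commute)
  moreover have "card (S l) = card (S l \<inter> Yc P l) + card (S l - Yc P l)"
    by (rule card_Int_Diff[OF Sl(2)])
  moreover note XS_bound[OF l]
  ultimately have "card (S l - Yc P l) \<le> 0"
    using E cT TT ZZ NN Sl(3) by linarith
  then show ?thesis using Sl(2) by auto
qed


lemma Mis3: "l \<in> {1..p} \<Longrightarrow> card (Mis P l) \<le> 3"
  using XS_bound by fastforce

lemma Bs3: "l \<in> {1..p} \<Longrightarrow> card (Bs P l) \<le> 3"
  using XS_bound by fastforce

lemma cover: assumes iI: "i \<in> {1..3*n}"
  shows "\<exists>l\<in>{1..p}. i \<in> S l \<and> same_cluster P (X i) (XS l)"
proof (rule ccontr)
  assume neg: "\<not> ?thesis"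
  define T where "T = L i \<times> {1..m}"
  define T1 where "T1 = {x\<in>T. \<not> same_cluster P (X i) (YS (fst x) (snd x))}"
  have finL: "finite (L i)" by (rule finite_subset[of _ "{1..p}"]) (auto simp: L_def)
  have finT: "finite T" using finL by (simp add: T_def)
  have finT1: "finite T1" using finT by (simp add: T1_def)
  have "(\<lambda>(a,b). YS a b) ` T1 \<subseteq> ES P (X i)"
    using iI by (auto simp: ES_def T1_def T_def L_def adjG_def posG_def)
  then have "card ((\<lambda>(a,b). YS a b) ` T1) \<le> card (ES P (X i))" by (rule card_mono[OF fin_ES])
  moreover have "card ((\<lambda>(a,b). YS a b) ` T1) = card T1" by (rule card_image) (auto simp: inj_on_def)
  moreover have tolX: "int (card (ES P (X i))) \<le> tol n p m S (X i)" using errb[of "X i"] iI by simp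
  ultimately have E: "int (card T1) \<le> int m * (int (dS p S i) - 1) + (int (cS n p S i) - 2) + (3 * int n - 3)"
    by simp
  have "T - T1 \<subseteq> Sigma (L i) (Mis P)"
  proof
    fix x assume x: "x \<in> T - T1"
    then obtain a b where xab: "x = (a,b)" by (cases x)
    have a: "a \<in> {1..p}" "i \<in> S a" "b \<in> {1..m}" using x xab by (auto simp: T_def L_def)
    have s1: "same_cluster P (X i) (YS a b)" using x xab by (auto simp: T1_def)
    have "\<not> same_cluster P (XS a) (YS a b)"
    proof
      assume "same_cluster P (XS a) (YS a b)"
      then have "same_cluster P (X i) (XS a)" by (rule trans'[OF s1 sc_sym])
      then show False using neg a by blast
    qed
    then show "x \<in> Sigma (L i) (Mis P)" using x xab a by (auto simp: T_def Mis_def)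
  qed
  then have "card (T - T1) \<le> card (Sigma (L i) (Mis P))"
    by (rule card_mono[rotated]) (use finL fin_Mis in auto)
  also have "\<dots> = (\<Sum>a\<in>L i. card (Mis P a))" using finL fin_Mis by simp
  also have "\<dots> \<le> card (L i) * 3" using sum_bounded_above[of "L i" "\<lambda>a. card (Mis P a)" 3] Mis3
    by (force simp: L_def)
  finally have T2: "card (T - T1) \<le> card (L i) * 3" .
  have "card (T - T1) = card T - card T1"
    by (rule card_Diff_subset[OF finT1]) (auto simp: T1_def)
  moreover have "card T1 \<le> card T" by (rule card_mono[OF finT]) (auto simp: T1_def)
  moreover have "card T = card (L i) * m" by (simp add: T_def card_cartesian_product)
  ultimately have "card (L i) * m \<le> card T1 + card (L i) * 3" using T2 by linarith
  then have A: "int (card (L i)) * int m \<le> int (card T1) + int (card (L i)) * 3"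
    by (metis of_nat_add of_nat_le_iff of_nat_mult of_nat_numeral)
  have "card (L i) \<le> card {1..p}" by (rule card_mono) (auto simp: L_def)
  then have Lp: "card (L i) \<le> p" by simp
  have "int m * (int (dS p S i) - 1) = int (card (L i)) * int m - int m"
    using card_L[of i] by (simp add: algebra_simps)
  then show False using A E Lp cS_le[OF iI] mbig n1 by linarith
qed

lemma distinct_cl: assumes l1: "l1 \<in> {1..p}" and l2: "l2 \<in> {1..p}" and ne: "l1 \<noteq> l2"
  and sc: "same_cluster P (XS l1) (XS l2)" shows False
proof -
  have "(\<lambda>k. (l2,k)) ` ({1..m} - Mis P l2) \<subseteq> Bs P l1"
    using trans'[OF sc] l2 ne by (auto simp: Mis_def Bs_def)
  then have "card ((\<lambda>k. (l2,k)) ` ({1..m} - Mis P l2)) \<le> card (Bs P l1)" by (rule card_mono[OF fin_Bs])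
  moreover have "card ((\<lambda>k. (l2,k)) ` ({1..m} - Mis P l2)) = card ({1..m} - Mis P l2)"
    by (rule card_image) (simp add: inj_on_def)
  moreover have "card ({1..m} - Mis P l2) = m - card (Mis P l2)"
    by (subst card_Diff_subset[OF fin_Mis]) (auto simp: Mis_def)
  ultimately show False using Bs3[OF l1] Mis3[OF l2] mbig n1 p1 by linarith
qed

lemma hard: "\<exists>I\<subseteq>{1..p}. \<forall>i\<in>{1..3*n}. \<exists>!l. l \<in> I \<and> i \<in> S l"
proof (intro exI[of _ "{l\<in>{1..p}. \<exists>i\<in>S l. same_cluster P (X i) (XS l)}"] conjI ballI)
  show "{l\<in>{1..p}. \<exists>i\<in>S l. same_cluster P (X i) (XS l)} \<subseteq> {1..p}" by blast
  fix i assume iI: "i \<in> {1..3*n}"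
  obtain l where l: "l\<in>{1..p}" "i \<in> S l" "same_cluster P (X i) (XS l)" using cover[OF iI] by blast
  have inY: "same_cluster P (XS l') (Y i)" if "l' \<in> {1..p}" "i \<in> S l'" "\<exists>j\<in>S l'. same_cluster P (X j) (XS l')" for l'
    using key[of l'] that by (auto simp: Yc_def)
  show "\<exists>!l. l \<in> {l\<in>{1..p}. \<exists>i\<in>S l. same_cluster P (X i) (XS l)} \<and> i \<in> S l"
  proof (rule ex1I[of _ l])
    show "l \<in> {l\<in>{1..p}. \<exists>i\<in>S l. same_cluster P (X i) (XS l)} \<and> i \<in> S l" using l by blast
    fix l' assume l': "l' \<in> {l\<in>{1..p}. \<exists>i\<in>S l. same_cluster P (X i) (XS l)} \<and> i \<in> S l'"
    have A: "same_cluster P (XS l) (Y i)" using inY l by blast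
    have B: "same_cluster P (XS l') (Y i)" using inY l' by blast
    have "same_cluster P (XS l') (XS l)" by (rule trans'[OF B sc_sym[OF A]])
    then show "l' = l" using distinct_cl l l' by blast
  qed
qed

end

context
  fixes I assumes Isub: "I \<subseteq> {1..p}" and exc: "\<forall>i\<in>{1..3*n}. \<exists>!l. l \<in> I \<and> i \<in> S l"
begin

abbreviation "ff \<equiv> cov I S"
abbreviation "PP \<equiv> (\<lambda>l. {v\<in>VV. gcl ff v = l}) ` {1..p}"

lemma fprop: "i \<in> {1..3*n} \<Longrightarrow> ff i \<in> I \<and> i \<in> S (ff i)"
  unfolding cov_def using exc by (metis (mono_tags, lifting) theI')

lemma fiff: "i \<in> {1..3*n} \<Longrightarrow> l \<in> I \<Longrightarrow> (ff i = l \<longleftrightarrow> i \<in> S l)"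
  using fprop exc by (metis (no_types, lifting))

lemma frange: "i \<in> {1..3*n} \<Longrightarrow> ff i \<in> {1..p}"
  using fprop Isub by blast

lemma grange: "v \<in> VV \<Longrightarrow> gcl ff v \<in> {1..p}"
  by (cases v) (use frange in \<open>auto simp del: atLeastAtMost_iff\<close>)

lemma partPP: "partition_on VV PP"
  unfolding partition_on_def disjoint_def
proof (intro conjI)
  show "\<Union> PP = VV" using grange by auto
  show "\<forall>a\<in>PP. \<forall>b\<in>PP. a \<noteq> b \<longrightarrow> a \<inter> b = {}" by auto
  show "{} \<notin> PP"
  proof
    assume "{} \<in> PP"
    then obtain l where "l \<in> {1..p}" "{v\<in>VV. gcl ff v = l} = {}" by auto
    moreover have "XS l \<in> {v\<in>VV. gcl ff v = l}" using calculation(1) by simp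
    ultimately show False by blast
  qed
qed

lemma scI: "u \<in> VV \<Longrightarrow> w \<in> VV \<Longrightarrow> same_cluster PP u w \<longleftrightarrow> gcl ff u = gcl ff w"
  unfolding same_cluster_def using grange by auto


lemma errXS_in: assumes lI: "l \<in> I" shows "ES PP (XS l) \<subseteq> Z ` S l"
proof
  fix w assume w: "w \<in> ES PP (XS l)"
  have l: "l \<in> {1..p}" using lI Isub by blast
  have wV: "w \<in> V2 n p m" using w by (auto simp: ES_def adjG_def)
  show "w \<in> Z ` S l"
  proof (cases w)
    case (Y u)
    then have u: "u \<in> {1..3*n}" using wV by simp
    then show ?thesis using w Y l fiff[OF u lI] scI by (auto simp: ES_def posG_def)
  next
    case (YS a b)
    then show ?thesis using w l scI wV by (auto simp: ES_def posG_def)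
  next
    case (Z u)
    then have u: "u \<in> {1..3*n}" using wV by simp
    then show ?thesis using w Z l fiff[OF u lI] scI by (auto simp: ES_def posG_def)
  qed (use wV in auto)
qed

lemma errXS_out: assumes l: "l \<in> {1..p}" "l \<notin> I" shows "ES PP (XS l) \<subseteq> Y ` S l"
proof
  fix w assume w: "w \<in> ES PP (XS l)"
  have wV: "w \<in> V2 n p m" using w by (auto simp: ES_def adjG_def)
  show "w \<in> Y ` S l"
  proof (cases w)
    case (Y u)
    then have u: "u \<in> {1..3*n}" using wV by simp
    have "ff u \<noteq> l" using fprop[OF u] l by auto
    then show ?thesis using w Y l u scI by (auto simp: ES_def posG_def)
  next
    case (YS a b)
    then show ?thesis using w l scI wV by (auto simp: ES_def posG_def)
  next
    case (Z u)
    then have u: "u \<in> {1..3*n}" using wV by simp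
    have "ff u \<noteq> l" using fprop[OF u] l by auto
    then show ?thesis using w Z l u scI by (auto simp: ES_def posG_def)
  qed (use wV in auto)
qed

lemma errX_in: assumes iI: "i \<in> {1..3*n}"
  shows "ES PP (X i) \<subseteq> Y ` (N i - S (ff i)) \<union> (\<lambda>(a,b). YS a b) ` ((L i - {ff i}) \<times> {1..m})
          \<union> Z ` ({1..3*n} - S (ff i))"
proof
  fix w assume w: "w \<in> ES PP (X i)"
  have wV: "w \<in> V2 n p m" using w by (auto simp: ES_def adjG_def)
  have f: "ff i \<in> I" "i \<in> S (ff i)" "ff i \<in> {1..p}" using fprop[OF iI] frange[OF iI] by auto
  show "w \<in> Y ` (N i - S (ff i)) \<union> (\<lambda>(a,b). YS a b) ` ((L i - {ff i}) \<times> {1..m})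
          \<union> Z ` ({1..3*n} - S (ff i))"
  proof (cases w)
    case (Y u)
    then have u: "u \<in> {1..3*n}" using wV by simp
    have "u \<notin> S (ff i)" "posG p S (X i) (Y u)"
      using w Y iI u scI fiff[OF u f(1)] f by (auto simp: ES_def posG_def)
    then show ?thesis using Y u by (auto simp: posG_def N_def)
  next
    case (YS a b)
    then have ab: "a \<in> {1..p}" "b \<in> {1..m}" using wV by auto
    have "i \<in> S a" "a \<noteq> ff i"
      using w YS iI ab scI f by (auto simp: ES_def posG_def)
    then show ?thesis using YS ab by (auto simp: L_def)
  next
    case (Z u)
    then have u: "u \<in> {1..3*n}" using wV by simp
    have "u \<notin> S (ff i)"
      using w Z iI u scI fiff[OF u f(1)] f by (auto simp: ES_def posG_def)
    then show ?thesis using Z u by auto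
  qed (use wV in auto)
qed


lemma easy: "\<exists>P. partition_on VV P \<and>
            (\<forall>v\<in>V1 n p. int (errors_at VV (adjG n p m) (posG p S) P v) \<le> tol n p m S v)"
proof (intro exI[of _ PP] conjI ballI)
  show "partition_on VV PP" by (rule partPP)
  fix v assume v: "v \<in> V1 n p"
  show "int (errors_at VV (adjG n p m) (posG p S) PP v) \<le> tol n p m S v"
  proof (cases v)
    case (XS l)
    then have l: "l \<in> {1..p}" using v by simp
    have "card (ES PP (XS l)) \<le> 3"
    proof (cases "l \<in> I")
      case True
      have "card (ES PP (XS l)) \<le> card (Z ` S l)"
        by (rule card_mono[OF _ errXS_in[OF True]]) (simp add: Sfin[OF l])
      also have "\<dots> \<le> card (S l)" by (rule card_image_le[OF Sfin[OF l]])
      finally show ?thesis using Scard[OF l] by simp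
    next
      case False
      have "card (ES PP (XS l)) \<le> card (Y ` S l)"
        by (rule card_mono[OF _ errXS_out[OF l False]]) (simp add: Sfin[OF l])
      also have "\<dots> \<le> card (S l)" by (rule card_image_le[OF Sfin[OF l]])
      finally show ?thesis using Scard[OF l] by simp
    qed
    then show ?thesis using XS by (simp add: err_eq)
  next
    case (X i)
    then have iI: "i \<in> {1..3*n}" using v by simp
    define f where "f = ff i"
    have f: "f \<in> I" "i \<in> S f" "f \<in> {1..p}" using fprop[OF iI] frange[OF iI] by (auto simp: f_def)
    have finL: "finite (L i)" by (rule finite_subset[of _ "{1..p}"]) (auto simp: L_def)
    have fL: "f \<in> L i" using f by (simp add: L_def)
    have finN: "finite (N i)" by (simp add: N_def)
    have SN: "S f \<subseteq> N i" using S_N f by blast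
    let ?A = "Y ` (N i - S f)"
    let ?B = "(\<lambda>(a,b). YS a b) ` ((L i - {f}) \<times> {1..m})"
    let ?C = "Z ` ({1..3*n} - S f)"
    have "card (ES PP (X i)) \<le> card (?A \<union> ?B \<union> ?C)"
      by (rule card_mono[OF _ errX_in[OF iI, folded f_def]]) (use finN finL in simp)
    also have "\<dots> \<le> card ?A + card ?B + card ?C"
      by (meson add_le_mono card_Un_le le_trans order_refl)
    also have "\<dots> \<le> card (N i - S f) + card ((L i - {f}) \<times> {1..m}) + card ({1..3*n} - S f)"
      by (intro add_le_mono card_image_le) (use finN finL in auto)
    finally have E: "card (ES PP (X i)) \<le> card (N i - S f) + card ((L i - {f}) \<times> {1..m}) + card ({1..3*n} - S f)" .
    have c1: "card (N i - S f) = card (N i) - 3"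
      using card_Diff_subset[OF Sfin[OF f(3)] SN] Scard[OF f(3)] by simp
    have c2: "card ((L i - {f}) \<times> {1..m}) = (card (L i) - 1) * m"
      using finL fL by (simp add: card_cartesian_product)
    have c3: "card ({1..3*n} - S f) = 3*n - 3"
      using card_Diff_subset[OF Sfin[OF f(3)] Ssub[OF f(3)]] Scard[OF f(3)] by simp
    have N3: "card (N i) \<ge> 3" using card_mono[OF finN SN] Scard[OF f(3)] by simp
    have L1: "card (L i) \<ge> 1" using finL fL by (metis One_nat_def Suc_leI card_gt_0_iff empty_iff)
    have i1: "int ((card (L i) - 1) * m) = int m * (int (dS p S i) - 1)"
      using L1 card_L[of i] by (simp add: of_nat_diff algebra_simps)
    have "int (card (ES PP (X i))) \<le> int (card (N i) - 3) + int ((card (L i) - 1) * m) + int (3*n - 3)"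
      using E c1 c2 c3 by linarith
    also have "\<dots> = tol n p m S (X i)"
      using N3 card_N[OF iI] i1 n1 by (simp add: of_nat_diff)
    finally show ?thesis using X by (simp add: err_eq)
  qed (use v in auto)
qed

end

end

theorem corollary2:
  fixes n p m :: nat and S :: "nat \<Rightarrow> nat set"
  assumes "n \<ge> 1" and "p \<ge> 1"
    and "\<forall>l\<in>{1..p}. S l \<subseteq> {1..3*n} \<and> card (S l) = 3"
    and "inj_on S {1..p}"
    and "m \<ge> 6*n + 3*p"
  shows "(\<exists>P. partition_on (V1 n p \<union> V2 n p m) P \<and>
            (\<forall>v\<in>V1 n p. int (errors_at (V1 n p \<union> V2 n p m) (adjG n p m) (posG p S) P v)
                            \<le> tol n p m S v))
         \<longleftrightarrow> (\<exists>I\<subseteq>{1..p}. \<forall>i\<in>{1..3*n}. \<exists>!l. l \<in> I \<and> i \<in> S l)"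
proof -
  interpret cc n p m S using assms by unfold_locales auto
  show ?thesis
  proof
    assume "\<exists>P. partition_on VV P \<and>
            (\<forall>v\<in>V1 n p. int (errors_at VV (adjG n p m) (posG p S) P v) \<le> tol n p m S v)"
    then obtain P where "partition_on VV P"
      "\<forall>v\<in>V1 n p. int (errors_at VV (adjG n p m) (posG p S) P v) \<le> tol n p m S v" by blast
    then show "\<exists>I\<subseteq>{1..p}. \<forall>i\<in>{1..3*n}. \<exists>!l. l \<in> I \<and> i \<in> S l" by (rule hard)
  next
    assume "\<exists>I\<subseteq>{1..p}. \<forall>i\<in>{1..3*n}. \<exists>!l. l \<in> I \<and> i \<in> S l"
    then obtain I where "I \<subseteq> {1..p}" "\<forall>i\<in>{1..3*n}. \<exists>!l. l \<in> I \<and> i \<in> S l" by blast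
    then show "\<exists>P. partition_on VV P \<and>
            (\<forall>v\<in>V1 n p. int (errors_at VV (adjG n p m) (posG p S) P v) \<le> tol n p m S v)"
      by (rule easy)
  qed
qed

end
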